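(* Let $N=(V,E,c,K)$ be a network with killing and let $(X_n)_{n\geq0}$ be the random walk on $N$ started at some $x\in V$. Then for every $m,n\geq0$, \[ \mathbb{E}\left[\frac{p_m(X_n,X_0)}{p_n(X_n,X_0)}\right]\leq\mathbb{P}(X_m\neq\dagger)+\mathbb{P}(X_n=\dagger)\leq2, \] with the convention that the ratio equals $1$ when $X_n=\dagger$.
   Context: A network with killing is $N=(V,E,c,K)$ where $(V,E)$ is a graph, $c:E\to(0,\infty)$ are conductances and $K:V\to[0,\infty)$ is a killing function. With $c(u)$ the total conductance of oriented edges emanating from $u$ and $c(u,v)$ the total conductance of oriented edges from $u$ to $v$, the random walk on $N$ is the Markov chain on $V\cup\{\dagger\}$ with $P(u,v)=c(u,v)/(c(u)+K(u))$ and $P(u,\dagger)=K(u)/(c(u)+K(u))$ for $u,v\in V$, and $P(\dagger,\dagger)=1$. Write $p_n(u,v)=P^n(u,v)$. *)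

theory Defs
  imports "HOL-Analysis.Analysis"
begin

text \<open>The (multi)graph (V,E) is given by a
set of edges E and an endpoint map ep; each edge e with ep e = (a,b) yields the two
oriented edges a to b and b to a (a loop yields two oriented loops).
The cemetery state is None; a vertex v is the state Some v.\<close>

definition cond_uv :: "'e set \<Rightarrow> ('e \<Rightarrow> 'v \<times> 'v) \<Rightarrow> ('e \<Rightarrow> real) \<Rightarrow> 'v \<Rightarrow> 'v \<Rightarrow> real" where
  "cond_uv E ep c u v =
     (\<Sum>\<^sub>\<infinity>e\<in>{e\<in>E. ep e = (u, v)}. c e) + (\<Sum>\<^sub>\<infinity>e\<in>{e\<in>E. ep e = (v, u)}. c e)"

definition cond_tot :: "'e set \<Rightarrow> ('e \<Rightarrow> 'v \<times> 'v) \<Rightarrow> ('e \<Rightarrow> real) \<Rightarrow> 'v \<Rightarrow> real" where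
  "cond_tot E ep c u =
     (\<Sum>\<^sub>\<infinity>e\<in>{e\<in>E. fst (ep e) = u}. c e) + (\<Sum>\<^sub>\<infinity>e\<in>{e\<in>E. snd (ep e) = u}. c e)"

definition network_with_killing ::
  "'v set \<Rightarrow> 'e set \<Rightarrow> ('e \<Rightarrow> 'v \<times> 'v) \<Rightarrow> ('e \<Rightarrow> real) \<Rightarrow> ('v \<Rightarrow> real) \<Rightarrow> bool" where
  "network_with_killing V E ep c K \<longleftrightarrow>
     (\<forall>e\<in>E. fst (ep e) \<in> V \<and> snd (ep e) \<in> V \<and> c e > 0) \<and>
     (\<forall>u\<in>V. K u \<ge> 0) \<and>
     (\<forall>u\<in>V. c summable_on {e\<in>E. fst (ep e) = u \<or> snd (ep e) = u}) \<and>
     (\<forall>u\<in>V. cond_tot E ep c u + K u > 0)"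

definition rw_states :: "'v set \<Rightarrow> 'v option set" where
  "rw_states V = insert None (Some ` V)"

definition rw_P ::
  "'e set \<Rightarrow> ('e \<Rightarrow> 'v \<times> 'v) \<Rightarrow> ('e \<Rightarrow> real) \<Rightarrow> ('v \<Rightarrow> real) \<Rightarrow> 'v option \<Rightarrow> 'v option \<Rightarrow> real" where
  "rw_P E ep c K s t =
     (case s of
        None \<Rightarrow> (if t = None then 1 else 0)
      | Some u \<Rightarrow> (case t of
            None \<Rightarrow> K u / (cond_tot E ep c u + K u)
          | Some v \<Rightarrow> cond_uv E ep c u v / (cond_tot E ep c u + K u)))"

primrec rw_p ::
  "'v set \<Rightarrow> 'e set \<Rightarrow> ('e \<Rightarrow> 'v \<times> 'v) \<Rightarrow> ('e \<Rightarrow> real) \<Rightarrow> ('v \<Rightarrow> real) \<Rightarrow>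
   nat \<Rightarrow> 'v option \<Rightarrow> 'v option \<Rightarrow> real" where
  "rw_p V E ep c K 0 s t = (if s = t then 1 else 0)"
| "rw_p V E ep c K (Suc n) s t =
     (\<Sum>\<^sub>\<infinity>z\<in>rw_states V. rw_P E ep c K s z * rw_p V E ep c K n z t)"

end

theory Submission imports Defs begin

primrec pw :: "'a set \<Rightarrow> ('a \<Rightarrow> 'a \<Rightarrow> real) \<Rightarrow> nat \<Rightarrow> 'a \<Rightarrow> 'a \<Rightarrow> real" where
  "pw S Q 0 u v = (if u = v then 1 else 0)"
| "pw S Q (Suc n) u v = (\<Sum>\<^sub>\<infinity>z\<in>S. Q u z * pw S Q n z v)"

lemma infsum_finsum:
  fixes f :: "'a \<Rightarrow> 'b \<Rightarrow> real"
  assumes "finite F" "\<And>v. v \<in> F \<Longrightarrow> (\<lambda>z. f z v) summable_on A"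
  shows "(\<lambda>z. \<Sum>v\<in>F. f z v) summable_on A \<and> infsum (\<lambda>z. \<Sum>v\<in>F. f z v) A = (\<Sum>v\<in>F. infsum (\<lambda>z. f z v) A)"
  using assms
proof (induction F rule: finite_induct)
  case empty
  then show ?case by simp
next
  case (insert x F)
  then have s1: "(\<lambda>z. f z x) summable_on A" and s2: "(\<lambda>z. \<Sum>v\<in>F. f z v) summable_on A"
    and e: "infsum (\<lambda>z. \<Sum>v\<in>F. f z v) A = (\<Sum>v\<in>F. infsum (\<lambda>z. f z v) A)" by auto
  show ?case using insert(1,2) summable_on_add[OF s1 s2] infsum_add[OF s1 s2] e by simp
qed

lemma singleton_has_sum:
  fixes f :: "'a \<Rightarrow> real"
  assumes "v \<in> S"
  shows "((\<lambda>z. f z * (if z = v then 1 else 0)) has_sum f v) S"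
proof -
  have "((\<lambda>z. f z * (if z = v then 1 else 0)) has_sum f v) {v}"
    using has_sum_finite[of "{v}" "\<lambda>z. f z * (if z = v then 1 else 0)"] by simp
  then show ?thesis by (subst (asm) has_sum_cong_neutral[where T=S]) (use assms in auto)
qed

lemma singleton_has_sum':
  fixes f :: "'a \<Rightarrow> real"
  assumes "v \<in> S"
  shows "((\<lambda>z. (if v = z then 1 else 0) * f z) has_sum f v) S"
  using singleton_has_sum[OF assms, of f] by (simp add: mult.commute eq_commute)

locale kern =
  fixes S :: "'a set" and Q :: "'a \<Rightarrow> 'a \<Rightarrow> real"
  assumes Qnn: "u \<in> S \<Longrightarrow> v \<in> S \<Longrightarrow> Q u v \<ge> 0"
  and Qfin: "u \<in> S \<Longrightarrow> finite F \<Longrightarrow> F \<subseteq> S \<Longrightarrow> sum (Q u) F \<le> 1"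
begin

lemma Qsum: "u \<in> S \<Longrightarrow> Q u summable_on S"
  by (rule nonneg_bdd_above_summable_on) (use Qnn Qfin in \<open>auto intro!: bdd_aboveI[where M=1]\<close>)

lemma Qrow: "u \<in> S \<Longrightarrow> infsum (Q u) S \<le> 1"
  by (rule infsum_le_finite_sums) (use Qsum Qfin in auto)

lemma Qle1: "u \<in> S \<Longrightarrow> v \<in> S \<Longrightarrow> Q u v \<le> 1"
  using Qfin[of u "{v}"] by simp

lemma pw_props:
  "u \<in> S \<Longrightarrow> (\<forall>v\<in>S. pw S Q n u v \<ge> 0) \<and> (\<forall>F. finite F \<longrightarrow> F \<subseteq> S \<longrightarrow> sum (pw S Q n u) F \<le> 1)"
proof (induction n arbitrary: u)
  case 0
  then show ?case by (auto simp: sum.delta)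
next
  case (Suc n)
  have nn: "z \<in> S \<Longrightarrow> v \<in> S \<Longrightarrow> pw S Q n z v \<ge> 0" for z v using Suc.IH by blast
  have le1: "z \<in> S \<Longrightarrow> v \<in> S \<Longrightarrow> pw S Q n z v \<le> 1" for z v using Suc.IH[of z] by (auto dest: spec[of _ "{v}"])
  have sm: "v \<in> S \<Longrightarrow> (\<lambda>z. Q u z * pw S Q n z v) summable_on S" for v
    by (rule summable_on_comparison_test[OF Qsum[OF Suc.prems]])
       (auto simp: Qnn Suc.prems nn le1 mult_left_le intro!: mult_nonneg_nonneg)
  show ?case
  proof (intro conjI ballI allI impI)
    fix v assume "v \<in> S"
    then show "pw S Q (Suc n) u v \<ge> 0"
      by (auto simp: Qnn Suc.prems nn intro!: infsum_nonneg mult_nonneg_nonneg)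
  next
    fix F assume F: "finite F" "F \<subseteq> S"
    have smF: "\<And>v. v \<in> F \<Longrightarrow> (\<lambda>z. Q u z * pw S Q n z v) summable_on S" using sm F by auto
    have "sum (pw S Q (Suc n) u) F = (\<Sum>v\<in>F. infsum (\<lambda>z. Q u z * pw S Q n z v) S)" by simp
    also have "\<dots> = infsum (\<lambda>z. \<Sum>v\<in>F. Q u z * pw S Q n z v) S"
      using infsum_finsum[OF F(1) smF] by simp
    also have "\<dots> \<le> infsum (Q u) S"
    proof (rule infsum_mono)
      show "(\<lambda>z. \<Sum>v\<in>F. Q u z * pw S Q n z v) summable_on S"
        using infsum_finsum[OF F(1) smF] by simp
      show "Q u summable_on S" using Qsum Suc.prems .
      fix z assume z: "z \<in> S"
      have "(\<Sum>v\<in>F. Q u z * pw S Q n z v) = Q u z * sum (pw S Q n z) F" by (simp add: sum_distrib_left)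
      also have "\<dots> \<le> Q u z * 1"
        using Suc.IH[OF z] F by (intro mult_left_mono) (auto simp: Qnn Suc.prems z)
      finally show "(\<Sum>v\<in>F. Q u z * pw S Q n z v) \<le> Q u z" by simp
    qed
    also have "\<dots> \<le> 1" using Qrow Suc.prems .
    finally show "sum (pw S Q (Suc n) u) F \<le> 1" .
  qed
qed

lemma pw_nn: "u \<in> S \<Longrightarrow> v \<in> S \<Longrightarrow> pw S Q n u v \<ge> 0"
  using pw_props by blast

lemma pw_fin: "u \<in> S \<Longrightarrow> finite F \<Longrightarrow> F \<subseteq> S \<Longrightarrow> sum (pw S Q n u) F \<le> 1"
  using pw_props by blast

lemma pw_le1: "u \<in> S \<Longrightarrow> v \<in> S \<Longrightarrow> pw S Q n u v \<le> 1"
  using pw_fin[of u "{v}"] by simp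

lemma pw_sum: "u \<in> S \<Longrightarrow> pw S Q n u summable_on S"
  by (rule nonneg_bdd_above_summable_on) (use pw_nn pw_fin in \<open>auto intro!: bdd_aboveI[where M=1]\<close>)

lemma pw_assoc:
  "u \<in> S \<Longrightarrow> v \<in> S \<Longrightarrow> pw S Q (Suc n) u v = (\<Sum>\<^sub>\<infinity>w\<in>S. pw S Q n u w * Q w v)"
proof (induction n arbitrary: u)
  case 0
  have "pw S Q (Suc 0) u v = Q u v"
    using singleton_has_sum[OF 0(2), of "Q u"] by (simp add: infsumI)
  moreover have "(\<Sum>\<^sub>\<infinity>w\<in>S. pw S Q 0 u w * Q w v) = Q u v"
    using singleton_has_sum'[OF 0(1), of "\<lambda>w. Q w v"] by (simp add: infsumI)
  ultimately show ?case by simp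
next
  case (Suc n)
  define f where "f z w = Q u z * pw S Q n z w * Q w v" for z w
  have inner_sm: "z \<in> S \<Longrightarrow> (\<lambda>w. pw S Q n z w * Q w v) summable_on S" for z
    by (rule summable_on_comparison_test[OF pw_sum[of z n]])
       (auto simp: Qnn Suc.prems pw_nn Qle1 mult_left_le intro!: mult_nonneg_nonneg)
  have inner: "z \<in> S \<Longrightarrow> ((\<lambda>w. f z w) has_sum (Q u z * pw S Q (Suc n) z v)) S" for z
  proof -
    assume z: "z \<in> S"
    have "((\<lambda>w. pw S Q n z w * Q w v) has_sum pw S Q (Suc n) z v) S"
      using Suc.IH[OF z Suc.prems(2)] inner_sm[OF z] by (simp add: has_sum_infsum)
    from has_sum_cmult_right[OF this, of "Q u z"] show ?thesis
      by (simp add: f_def mult.assoc)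
  qed
  have outer_sm: "(\<lambda>z. Q u z * pw S Q (Suc n) z v) summable_on S"
    by (rule summable_on_comparison_test[OF Qsum[OF Suc.prems(1)]])
       (auto simp del: pw.simps simp: Qnn Suc.prems pw_nn pw_le1 mult_left_le intro!: mult_nonneg_nonneg)
  have fnn: "\<And>z w. z \<in> S \<Longrightarrow> w \<in> S \<Longrightarrow> 0 \<le> f z w"
    by (auto simp: f_def Qnn pw_nn Suc.prems intro!: mult_nonneg_nonneg)
  have prod_sm: "(\<lambda>(z, w). f z w) summable_on (S \<times> S)"
    using summable_on_SigmaI[where f="\<lambda>(z, w). f z w" and A=S and B="\<lambda>_. S", OF _ outer_sm]
      inner fnn by auto
  have "pw S Q (Suc (Suc n)) u v = (\<Sum>\<^sub>\<infinity>z\<in>S. Q u z * pw S Q (Suc n) z v)"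
    by (rule pw.simps(2))
  also have "\<dots> = (\<Sum>\<^sub>\<infinity>z\<in>S. \<Sum>\<^sub>\<infinity>w\<in>S. f z w)"
    by (rule infsum_cong) (metis inner infsumI)
  also have "\<dots> = (\<Sum>\<^sub>\<infinity>w\<in>S. \<Sum>\<^sub>\<infinity>z\<in>S. f z w)"
    by (rule infsum_swap_banach[OF prod_sm])
  also have "\<dots> = (\<Sum>\<^sub>\<infinity>w\<in>S. pw S Q (Suc n) u w * Q w v)"
    by (auto simp: f_def infsum_cmult_left' intro!: infsum_cong)
  finally show ?case .
qed

end

locale rkern = kern +
  fixes T :: "'a set" and pi :: "'a \<Rightarrow> real"
  assumes TS: "T \<subseteq> S"
  and pipos: "u \<in> T \<Longrightarrow> pi u > 0"
  and db: "u \<in> T \<Longrightarrow> v \<in> T \<Longrightarrow> pi u * Q u v = pi v * Q v u"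
  and outQ: "z \<in> S - T \<Longrightarrow> u \<in> T \<Longrightarrow> Q z u = 0"
begin

lemma pw_out: "z \<in> S - T \<Longrightarrow> v \<in> T \<Longrightarrow> pw S Q n z v = 0"
proof (induction n arbitrary: z)
  case 0 then show ?case by auto
next
  case (Suc n)
  have "\<And>w. w \<in> S \<Longrightarrow> Q z w * pw S Q n w v = 0"
    using Suc outQ by (metis Diff_iff mult_zero_left mult_zero_right)
  then show ?case by (simp add: infsum_0)
qed

lemma pw_rev: "u \<in> T \<Longrightarrow> v \<in> T \<Longrightarrow> pi u * pw S Q n u v = pi v * pw S Q n v u"
proof (induction n arbitrary: u v)
  case 0 then show ?case by auto
next
  case (Suc n)
  have uS: "u \<in> S" and vS: "v \<in> S" using Suc.prems TS by auto
  have pt: "pi u * (Q u z * pw S Q n z v) = pi v * (pw S Q n v z * Q z u)" if z: "z \<in> S" for z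
  proof (cases "z \<in> T")
    case True
    have "pi u * (Q u z * pw S Q n z v) = Q z u * (pi z * pw S Q n z v)"
      using db[OF Suc.prems(1) True] by (simp add: algebra_simps)
    also have "\<dots> = Q z u * (pi v * pw S Q n v z)" using Suc.IH[OF True Suc.prems(2)] by simp
    finally show ?thesis by (simp add: algebra_simps)
  next
    case False
    then show ?thesis using pw_out[of z v n] outQ[of z u] Suc.prems z by auto
  qed
  have "pi u * pw S Q (Suc n) u v = (\<Sum>\<^sub>\<infinity>z\<in>S. pi u * (Q u z * pw S Q n z v))"
    by (simp add: infsum_cmult_right')
  also have "\<dots> = (\<Sum>\<^sub>\<infinity>z\<in>S. pi v * (pw S Q n v z * Q z u))"
    using pt by (rule infsum_cong)
  also have "\<dots> = pi v * pw S Q (Suc n) v u"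
    by (simp only: infsum_cmult_right' pw_assoc[OF vS uS])
  finally show ?case .
qed

end


lemma rw_p_pw: "rw_p V E ep c K n = pw (rw_states V) (rw_P E ep c K) n"
  by (induction n) (auto intro!: ext)

context
  fixes V :: "'v set" and E :: "'e set" and ep :: "'e \<Rightarrow> 'v \<times> 'v"
    and c :: "'e \<Rightarrow> real" and K :: "'v \<Rightarrow> real"
  assumes N: "network_with_killing V E ep c K"
begin

lemma cpos: "e \<in> E \<Longrightarrow> c e > 0" and Knn: "u \<in> V \<Longrightarrow> K u \<ge> 0"
  and csum: "u \<in> V \<Longrightarrow> c summable_on {e\<in>E. fst (ep e) = u \<or> snd (ep e) = u}"
  and pipos: "u \<in> V \<Longrightarrow> cond_tot E ep c u + K u > 0"
  and epV: "e \<in> E \<Longrightarrow> fst (ep e) \<in> V \<and> snd (ep e) \<in> V"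
  using N unfolding network_with_killing_def by auto

lemma cuv_nn: "cond_uv E ep c u v \<ge> 0"
  unfolding cond_uv_def using cpos
  by (intro add_nonneg_nonneg infsum_nonneg) (auto intro: less_imp_le)

lemma ctot_nn: "cond_tot E ep c u \<ge> 0"
  unfolding cond_tot_def using cpos
  by (intro add_nonneg_nonneg infsum_nonneg) (auto intro: less_imp_le)

lemma cuv_sym: "cond_uv E ep c u v = cond_uv E ep c v u"
  unfolding cond_uv_def by simp

lemma cuv_fin:
  assumes u: "u \<in> V" and G: "finite G"
  shows "sum (cond_uv E ep c u) G \<le> cond_tot E ep c u"
proof -
  let ?A = "{e\<in>E. fst (ep e) = u \<or> snd (ep e) = u}"
  have sub: "B \<subseteq> ?A \<Longrightarrow> c summable_on B" for B
    using summable_on_subset_banach csum[OF u] by blast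
  have cnn: "\<And>e. e \<in> E \<Longrightarrow> c e \<ge> 0" using cpos less_imp_le by blast
  have 1: "(\<Sum>v\<in>G. infsum c {e\<in>E. ep e = (u, v)}) \<le> infsum c {e\<in>E. fst (ep e) = u}"
  proof -
    have "(\<Sum>v\<in>G. infsum c {e\<in>E. ep e = (u, v)}) = infsum c (\<Union>v\<in>G. {e\<in>E. ep e = (u, v)})"
      by (rule sum_infsum[OF G]) (auto intro!: sub)
    also have "\<dots> \<le> infsum c {e\<in>E. fst (ep e) = u}"
      by (rule infsum_mono_neutral) (auto intro!: sub cnn)
    finally show ?thesis .
  qed
  have 2: "(\<Sum>v\<in>G. infsum c {e\<in>E. ep e = (v, u)}) \<le> infsum c {e\<in>E. snd (ep e) = u}"
  proof -
    have "(\<Sum>v\<in>G. infsum c {e\<in>E. ep e = (v, u)}) = infsum c (\<Union>v\<in>G. {e\<in>E. ep e = (v, u)})"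
      by (rule sum_infsum[OF G]) (auto intro!: sub)
    also have "\<dots> \<le> infsum c {e\<in>E. snd (ep e) = u}"
      by (rule infsum_mono_neutral) (auto intro!: sub cnn)
    finally show ?thesis .
  qed
  show ?thesis using 1 2 unfolding cond_uv_def cond_tot_def by (simp add: sum.distrib)
qed

definition "piN s = (case s of None \<Rightarrow> 1 | Some u \<Rightarrow> cond_tot E ep c u + K u)"

lemma is_rkern: "rkern (rw_states V) (rw_P E ep c K) (Some ` V) piN"
proof
  fix u v assume "u \<in> rw_states V" "v \<in> rw_states V"
  then show "0 \<le> rw_P E ep c K u v"
    by (auto simp: rw_states_def rw_P_def cuv_nn Knn pipos less_imp_le split: option.split)
next
  fix u and F :: "'v option set"
  assume u: "u \<in> rw_states V" and F: "finite F" "F \<subseteq> rw_states V"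
  show "sum (rw_P E ep c K u) F \<le> 1"
  proof (cases u)
    case None
    then show ?thesis using F by (simp add: rw_P_def sum.delta')
  next
    case (Some a)
    with u have a: "a \<in> V" by (auto simp: rw_states_def)
    let ?p = "cond_tot E ep c a + K a"
    have pp: "?p > 0" using pipos[OF a] .
    define G where "G = {v\<in>V. Some v \<in> F}"
    have Gfin: "finite G" unfolding G_def
      by (rule finite_subset[OF _ finite_vimageI[OF F(1), of Some]]) auto
    have FG: "F \<subseteq> insert None (Some ` G)" using F(2) by (auto simp: G_def rw_states_def)
    have nn: "\<And>t. 0 \<le> rw_P E ep c K u t"
      using Some a pp Knn cuv_nn by (auto simp: rw_P_def split: option.split)
    have "sum (rw_P E ep c K u) F \<le> sum (rw_P E ep c K u) (insert None (Some ` G))"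
      by (rule sum_mono2) (use Gfin FG nn in auto)
    also have "\<dots> = K a / ?p + (\<Sum>v\<in>G. cond_uv E ep c a v / ?p)"
      using Gfin by (simp add: Some rw_P_def sum.reindex)
    also have "\<dots> = (K a + sum (cond_uv E ep c a) G) / ?p"
      by (simp add: add_divide_distrib sum_divide_distrib)
    also have "\<dots> \<le> ?p / ?p"
      using cuv_fin[OF a Gfin] pp by (intro divide_right_mono) auto
    also have "\<dots> = 1" using pp by simp
    finally show ?thesis .
  qed
next
  show "Some ` V \<subseteq> rw_states V" by (auto simp: rw_states_def)
next
  fix u assume "u \<in> Some ` V" then show "piN u > 0" by (auto simp: piN_def pipos)
next
  fix u v assume "u \<in> Some ` V" "v \<in> Some ` V"
  then obtain a b where ab: "u = Some a" "v = Some b" "a \<in> V" "b \<in> V" by auto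
  then show "piN u * rw_P E ep c K u v = piN v * rw_P E ep c K v u"
    using pipos[OF ab(3)] pipos[OF ab(4)] cuv_sym[of a b] by (simp add: piN_def rw_P_def)
next
  fix z u assume "z \<in> rw_states V - Some ` V" "u \<in> Some ` V"
  then show "rw_P E ep c K z u = 0" by (auto simp: rw_states_def rw_P_def)
qed

end


theorem lemma3p3:
  fixes V :: "'v set" and E :: "'e set" and ep :: "'e \<Rightarrow> 'v \<times> 'v"
    and c :: "'e \<Rightarrow> real" and K :: "'v \<Rightarrow> real" and x :: 'v and m n :: nat
  assumes "network_with_killing V E ep c K" and "x \<in> V"
  shows "(\<lambda>y. rw_p V E ep c K n (Some x) (Some y) *
              (rw_p V E ep c K m (Some y) (Some x) / rw_p V E ep c K n (Some y) (Some x)))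
           summable_on V
    \<and> (\<Sum>\<^sub>\<infinity>y\<in>V. rw_p V E ep c K n (Some x) (Some y) *
              (rw_p V E ep c K m (Some y) (Some x) / rw_p V E ep c K n (Some y) (Some x)))
        + rw_p V E ep c K n (Some x) None * 1
      \<le> (\<Sum>\<^sub>\<infinity>y\<in>V. rw_p V E ep c K m (Some x) (Some y)) + rw_p V E ep c K n (Some x) None
    \<and> (\<Sum>\<^sub>\<infinity>y\<in>V. rw_p V E ep c K m (Some x) (Some y)) + rw_p V E ep c K n (Some x) None \<le> 2"
proof -
  let ?S = "rw_states V" and ?Q = "rw_P E ep c K" and ?T = "Some ` V"
  let ?pi = "piN E ep c K"
  interpret rkern ?S ?Q ?T ?pi using is_rkern[OF assms(1)] .
  let ?p = "\<lambda>k a b. pw ?S ?Q k (Some a) (Some b)"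
  have xS: "Some x \<in> ?S" and NS: "None \<in> ?S" by (auto simp: rw_states_def assms(2))
  have yS: "y \<in> V \<Longrightarrow> Some y \<in> ?S" for y by (auto simp: rw_states_def)
  have tm: "?p n x y * (?p m y x / ?p n y x) = ?p m x y" if y: "y \<in> V" and ne: "?p n y x \<noteq> 0" for y
  proof -
    have px: "?pi (Some x) > 0" using pipos assms(2) by auto
    have r1: "?pi (Some x) * ?p n x y = ?pi (Some y) * ?p n y x" using pw_rev assms(2) y by auto
    have r2: "?pi (Some x) * ?p m x y = ?pi (Some y) * ?p m y x" using pw_rev assms(2) y by auto
    have alg: "\<And>a b c d e::real. a * b = e * d \<Longrightarrow> d \<noteq> 0 \<Longrightarrow> a * (b * (c / d)) = e * c"
      by (metis (no_types, opaque_lifting) mult.assoc mult.commute nonzero_mult_div_cancel_left times_divide_eq_right)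
    have "?pi (Some x) * (?p n x y * (?p m y x / ?p n y x)) = ?pi (Some y) * ?p m y x"
      by (rule alg[OF r1 ne])
    also have "\<dots> = ?pi (Some x) * ?p m x y" using r2 by simp
    finally have "?pi (Some x) * (?p n x y * (?p m y x / ?p n y x)) = ?pi (Some x) * ?p m x y" .
    then show ?thesis using px by (metis mult_left_cancel less_irrefl)
  qed
  have tle: "0 \<le> ?p n x y * (?p m y x / ?p n y x) \<and> ?p n x y * (?p m y x / ?p n y x) \<le> ?p m x y"
    if y: "y \<in> V" for y
  proof (cases "?p n y x = 0")
    case True then show ?thesis using pw_nn[OF xS yS[OF y]] by simp
  next
    case False then show ?thesis using tm[OF y False] pw_nn[OF xS yS[OF y]] by simp
  qed
  have finV: "sum (?p m x) G \<le> 1" if G: "finite G" "G \<subseteq> V" for G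
  proof -
    have "sum (?p m x) G = sum (pw ?S ?Q m (Some x)) (Some ` G)" by (simp add: sum.reindex)
    also have "\<dots> \<le> 1" using G by (intro pw_fin[OF xS]) (auto simp: rw_states_def)
    finally show ?thesis .
  qed
  have smV: "?p m x summable_on V"
    by (rule nonneg_bdd_above_summable_on) (use pw_nn[OF xS] yS finV in \<open>auto intro!: bdd_aboveI[where M=1]\<close>)
  have leV: "infsum (?p m x) V \<le> 1" by (rule infsum_le_finite_sums[OF smV finV])
  have smT: "(\<lambda>y. ?p n x y * (?p m y x / ?p n y x)) summable_on V"
    by (rule summable_on_comparison_test[OF smV]) (use tle in auto)
  have mono: "(\<Sum>\<^sub>\<infinity>y\<in>V. ?p n x y * (?p m y x / ?p n y x)) \<le> infsum (?p m x) V"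
    by (rule infsum_mono[OF smT smV]) (use tle in auto)
  have N1: "pw ?S ?Q n (Some x) None \<le> 1" by (rule pw_le1[OF xS NS])
  show ?thesis unfolding rw_p_pw using smT mono leV N1 by simp
qed

end
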